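(* Let $R$ be a commutative ring such that there exists a derivation $\partial\in\mathrm{Der}(R)$ with $r\partial\neq0$ for all nonzero $r\in R$. Then the group homomorphism $\mathrm{Aut}(R)\to\mathrm{Aut}_{\mathrm{Lie}}(\mathrm{Der}(R))$, $\sigma\mapsto(\delta\mapsto\sigma\delta\sigma^{-1})$, is a monomorphism.
   Context: $\mathrm{Aut}(R)$ is the group of ring automorphisms of $R$, $\mathrm{Der}(R)$ is the Lie algebra of derivations of $R$ with bracket $[\delta,\delta']=\delta\delta'-\delta'\delta$, and $r\partial$ denotes the derivation $a\mapsto r\partial(a)$. *)

theory Defs
  imports Main
begin

definition is_derivation :: "('a::comm_ring_1 \<Rightarrow> 'a) \<Rightarrow> bool" where
  "is_derivation d \<longleftrightarrow> (\<forall>a b. d (a + b) = d a + d b) \<and> (\<forall>a b. d (a * b) = a * d b + b * d a)"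

definition Der :: "('a::comm_ring_1 \<Rightarrow> 'a) set" where
  "Der = {d. is_derivation d}"

definition der_bracket :: "('a::comm_ring_1 \<Rightarrow> 'a) \<Rightarrow> ('a \<Rightarrow> 'a) \<Rightarrow> ('a \<Rightarrow> 'a)" where
  "der_bracket d d' = (\<lambda>a. d (d' a) - d' (d a))"

definition Aut :: "('a::comm_ring_1 \<Rightarrow> 'a) set" where
  "Aut = {\<sigma>. bij \<sigma> \<and> (\<forall>a b. \<sigma> (a + b) = \<sigma> a + \<sigma> b) \<and> (\<forall>a b. \<sigma> (a * b) = \<sigma> a * \<sigma> b) \<and> \<sigma> 1 = 1}"

text \<open>Lie algebra automorphisms of Der(R) (Der(R) is a Lie ring, i.e. Lie algebra over the integers):
  bijections of Der(R) onto itself that are additive and preserve the bracket.\<close>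
definition Aut_Lie_Der :: "(('a::comm_ring_1 \<Rightarrow> 'a) \<Rightarrow> ('a \<Rightarrow> 'a)) set" where
  "Aut_Lie_Der = {\<Phi>. bij_betw \<Phi> Der Der \<and>
     (\<forall>d\<in>Der. \<forall>d'\<in>Der. \<Phi> (\<lambda>a. d a + d' a) = (\<lambda>a. \<Phi> d a + \<Phi> d' a)
                       \<and> \<Phi> (der_bracket d d') = der_bracket (\<Phi> d) (\<Phi> d'))}"

definition conj_der :: "('a \<Rightarrow> 'a) \<Rightarrow> ('a \<Rightarrow> 'a) \<Rightarrow> ('a \<Rightarrow> 'a)" where
  "conj_der \<sigma> \<delta> = \<sigma> \<circ> \<delta> \<circ> inv \<sigma>"

end

theory Submission
  imports Defs
begin

lemma aut_inv:
  assumes "\<sigma> \<in> Aut" shows "inv \<sigma> \<in> Aut"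
proof -
  have b: "bij \<sigma>" and ad: "\<And>a b. \<sigma> (a + b) = \<sigma> a + \<sigma> b"
    and mu: "\<And>a b. \<sigma> (a * b) = \<sigma> a * \<sigma> b" and one: "\<sigma> 1 = 1"
    using assms by (auto simp: Aut_def)
  have s: "\<And>x. \<sigma> (inv \<sigma> x) = x" using b by (simp add: bij_is_surj surj_f_inv_f)
  have i: "\<And>x. inv \<sigma> (\<sigma> x) = x" using b by (simp add: bij_is_inj inv_f_f)
  have "inv \<sigma> (a + b) = inv \<sigma> a + inv \<sigma> b" for a b
    by (metis ad s i)
  moreover have "inv \<sigma> (a * b) = inv \<sigma> a * inv \<sigma> b" for a b
    by (metis mu s i)
  moreover have "inv \<sigma> 1 = 1" by (metis one i)
  ultimately show ?thesis using b bij_imp_bij_inv by (auto simp: Aut_def)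
qed

lemma aut_props:
  assumes "\<sigma> \<in> Aut"
  shows "bij \<sigma>" "\<And>a b. \<sigma> (a + b) = \<sigma> a + \<sigma> b" "\<And>a b. \<sigma> (a * b) = \<sigma> a * \<sigma> b"
    "\<And>x. \<sigma> (inv \<sigma> x) = x" "\<And>x. inv \<sigma> (\<sigma> x) = x"
  using assms by (auto simp: Aut_def bij_is_surj surj_f_inv_f bij_is_inj inv_f_f)

lemma conj_der_Der:
  assumes "\<sigma> \<in> Aut" "d \<in> Der" shows "conj_der \<sigma> d \<in> Der"
proof -
  have I: "inv \<sigma> \<in> Aut" using aut_inv assms(1) .
  note A = aut_props[OF assms(1)] and B = aut_props[OF I]
  have "is_derivation d" using assms(2) by (simp add: Der_def)
  hence da: "\<And>a b. d (a + b) = d a + d b" and dm: "\<And>a b. d (a * b) = a * d b + b * d a"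
    by (auto simp: is_derivation_def)
  show ?thesis
    by (simp add: Der_def is_derivation_def conj_der_def B(2,3) da dm A(2,3) A(4))
qed

lemma conj_der_inv:
  assumes "\<sigma> \<in> Aut" shows "conj_der (inv \<sigma>) (conj_der \<sigma> d) = d"
  using aut_props[OF assms] by (auto simp: conj_der_def inv_inv_eq fun_eq_iff)

lemma conj_der_inv2:
  assumes "\<sigma> \<in> Aut" shows "conj_der \<sigma> (conj_der (inv \<sigma>) d) = d"
proof -
  have "inv (inv \<sigma>) = \<sigma>" using aut_props(1)[OF assms] by (simp add: inv_inv_eq)
  then show ?thesis using conj_der_inv[OF aut_inv[OF assms], of d] by simp
qed

theorem lemma2p2:
  fixes D :: "'a::comm_ring_1 \<Rightarrow> 'a"
  assumes "D \<in> Der"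
    and "\<forall>r. r \<noteq> 0 \<longrightarrow> (\<lambda>a. r * D a) \<noteq> (\<lambda>a. 0)"
  shows "(\<forall>\<sigma>\<in>(Aut :: ('a \<Rightarrow> 'a) set). conj_der \<sigma> \<in> Aut_Lie_Der)
    \<and> (\<forall>\<sigma>\<in>(Aut :: ('a \<Rightarrow> 'a) set). \<forall>\<tau>\<in>Aut. \<forall>\<delta>\<in>Der.
          conj_der (\<sigma> \<circ> \<tau>) \<delta> = conj_der \<sigma> (conj_der \<tau> \<delta>))
    \<and> (\<forall>\<sigma>\<in>(Aut :: ('a \<Rightarrow> 'a) set). \<forall>\<tau>\<in>Aut.
          (\<forall>\<delta>\<in>Der. conj_der \<sigma> \<delta> = conj_der \<tau> \<delta>) \<longrightarrow> \<sigma> = \<tau>)"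
proof (intro conjI ballI impI)
  fix \<sigma> :: "'a \<Rightarrow> 'a" assume s: "\<sigma> \<in> Aut"
  note A = aut_props[OF s]
  have bb: "bij_betw (conj_der \<sigma>) Der Der"
  proof (rule bij_betw_byWitness[where f' = "conj_der (inv \<sigma>)"])
    show "\<forall>a\<in>Der. conj_der (inv \<sigma>) (conj_der \<sigma> a) = a" using conj_der_inv[OF s] by simp
    show "\<forall>a'\<in>Der. conj_der \<sigma> (conj_der (inv \<sigma>) a') = a'" using conj_der_inv2[OF s] by simp
    show "conj_der \<sigma> ` Der \<subseteq> Der" using conj_der_Der[OF s] by auto
    show "conj_der (inv \<sigma>) ` Der \<subseteq> Der" using conj_der_Der[OF aut_inv[OF s]] by auto
  qed
  have add: "conj_der \<sigma> (\<lambda>a. d a + d' a) = (\<lambda>a. conj_der \<sigma> d a + conj_der \<sigma> d' a)" for d d'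
    by (simp add: conj_der_def A(2) fun_eq_iff)
  have dif: "\<sigma> (x - y) = \<sigma> x - \<sigma> y" for x y
    by (metis A(2) add_diff_cancel eq_diff_eq)
  have br: "conj_der \<sigma> (der_bracket d d') = der_bracket (conj_der \<sigma> d) (conj_der \<sigma> d')" for d d'
    by (simp add: conj_der_def der_bracket_def dif A(5) fun_eq_iff)
  show "conj_der \<sigma> \<in> Aut_Lie_Der"
    unfolding Aut_Lie_Der_def using bb add br by blast
next
  fix \<sigma> \<tau> :: "'a \<Rightarrow> 'a" and \<delta> assume s: "\<sigma> \<in> Aut" and t: "\<tau> \<in> Aut"
  have "inv (\<sigma> \<circ> \<tau>) = inv \<tau> \<circ> inv \<sigma>"
    using aut_props(1)[OF s] aut_props(1)[OF t] by (simp add: o_inv_distrib)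
  then show "conj_der (\<sigma> \<circ> \<tau>) \<delta> = conj_der \<sigma> (conj_der \<tau> \<delta>)"
    by (simp add: conj_der_def o_assoc)
next
  fix \<sigma> \<tau> :: "'a \<Rightarrow> 'a" assume s: "\<sigma> \<in> Aut" and t: "\<tau> \<in> Aut"
    and eq: "\<forall>\<delta>\<in>Der. conj_der \<sigma> \<delta> = conj_der \<tau> \<delta>"
  note A = aut_props[OF s] and T = aut_props[OF t] and TI = aut_props[OF aut_inv[OF t]]
  define \<rho> where "\<rho> = (\<lambda>x. inv \<tau> (\<sigma> x))"
  have comm: "\<rho> (d a) = d (\<rho> a)" if "d \<in> Der" for d a
  proof -
    have "conj_der \<sigma> d (\<sigma> a) = conj_der \<tau> d (\<sigma> a)" using eq that by simp
    hence "\<sigma> (d a) = \<tau> (d (inv \<tau> (\<sigma> a)))" by (simp add: conj_der_def A(5))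
    hence "inv \<tau> (\<sigma> (d a)) = d (inv \<tau> (\<sigma> a))" by (simp add: T(5))
    thus ?thesis by (simp add: \<rho>_def)
  qed
  have Dd: "is_derivation D" using assms(1) by (simp add: Der_def)
  have rD: "(\<lambda>a. r * D a) \<in> Der" for r
    using Dd by (simp add: Der_def is_derivation_def algebra_simps)
  have rsurj: "\<exists>a. \<rho> a = b" for b
    by (rule exI[of _ "inv \<sigma> (\<tau> b)"]) (simp add: \<rho>_def A(4) T(5))
  have fx: "\<rho> r = r" for r
  proof (rule ccontr)
    assume ne: "\<rho> r \<noteq> r"
    have "(\<rho> r - r) * D b = 0" for b
    proof -
      obtain a where a: "\<rho> a = b" using rsurj by blast
      have "\<rho> (r * D a) = r * D (\<rho> a)" using comm[OF rD[of r]] .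
      moreover have "\<rho> (r * D a) = \<rho> r * \<rho> (D a)" by (simp add: \<rho>_def A(3) TI(3))
      moreover have "\<rho> (D a) = D (\<rho> a)" using comm[OF assms(1)] .
      ultimately show ?thesis using a by (simp add: algebra_simps)
    qed
    hence "(\<lambda>b. (\<rho> r - r) * D b) = (\<lambda>a. 0)" by auto
    with assms(2) ne show False by auto
  qed
  show "\<sigma> = \<tau>"
  proof
    fix x
    have "inv \<tau> (\<sigma> x) = x" using fx[of x] by (simp add: \<rho>_def)
    hence "\<tau> (inv \<tau> (\<sigma> x)) = \<tau> x" by simp
    thus "\<sigma> x = \<tau> x" by (simp add: T(4))
  qed
qed

end
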